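(* Let $\kappa>0$ and let $F\in C^4(\mathbb{R})$ be an even function for which there exist values $\phi_1<\phi_3<0<\phi_4<\phi_2$ such that: $F$ is strictly decreasing on $(-\infty,\phi_1)$ and on $(0,\phi_2)$ and strictly increasing on $(\phi_1,0)$ and on $(\phi_2,+\infty)$; $F$ is convex on $(-\infty,\phi_3)$ and on $(\phi_4,+\infty)$ and concave on $(\phi_3,\phi_4)$; $F$ has local minima at $\phi_1,\phi_2$ with $F(\phi_1)=F(\phi_2)=0$, and a local maximum at $0$. For $a\in(0,\phi_2)$ define $$p(a)=4\int_0^a \frac{dy}{\sqrt{\frac{2}{\kappa}\,(F(y)-F(a))}}.$$ Then for all $a\in(0,\phi_2)$, $$p'(a)=\frac{2\sqrt{2\kappa}}{\sqrt{F(0)-F(a)}}-\sqrt{2\kappa}\int_0^a\frac{F'(y)-F'(a)}{(F(y)-F(a))^{3/2}}\,dy .$$ In addition, if $F'''(\phi)>0$ for all $\phi\in(0,\phi_2)$, then $p'(a)>0$ for all $a\in(0,\phi_2)$.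
   Context: $p(a)$ is the period of the (unique up to translation) periodic stationary solution of amplitude $a$ of the Cahn--Hilliard equation $\phi_t=(M(\phi)(-\kappa\phi_{xx}+F'(\phi))_x)_x$, i.e. of $-\kappa\bar\phi''+F'(\bar\phi)=0$. The integrals above are (possibly) improper at $y=a$. *)

theory Defs
  imports "HOL-Analysis.Analysis"
begin

definition C_k_real :: "nat \<Rightarrow> (real \<Rightarrow> real) \<Rightarrow> bool" where
  "C_k_real k F \<longleftrightarrow>
     (\<forall>j<k. \<forall>x. ((deriv ^^ j) F) differentiable (at x)) \<and> continuous_on UNIV ((deriv ^^ k) F)"

text \<open>Period of the periodic stationary solution of amplitude a (improper integral at y = a,
  taken as a Henstock-Kurzweil integral over [0,a]).\<close>
definition period :: "real \<Rightarrow> (real \<Rightarrow> real) \<Rightarrow> real \<Rightarrow> real" where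
  "period \<kappa> F a = 4 * integral {0..a} (\<lambda>y. 1 / sqrt ((2 / \<kappa>) * (F y - F a)))"

end

theory Submission
  imports Defs
begin

definition dq :: "(real \<Rightarrow> real) \<Rightarrow> (real \<Rightarrow> real) \<Rightarrow> real \<Rightarrow> real \<Rightarrow> real" where
  "dq f g x h = (if h = 0 then g x else (f (x + h) - f x) / h)"

lemma dq_cont:
  assumes der: "\<And>x. (f has_real_derivative g x) (at x)" and cg: "continuous_on UNIV g"
  shows "continuous_on UNIV (\<lambda>p. dq f g (fst p) (snd p))"
proof -
  have cf: "continuous_on UNIV f"
    by (meson DERIV_isCont continuous_at_imp_continuous_on der)
  have "isCont (\<lambda>p. dq f g (fst p) (snd p)) p" for p :: "real \<times> real"
  proof (cases "snd p = 0")
    case False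
    have ev: "eventually (\<lambda>q. (f (fst q + snd q) - f (fst q)) / snd q = dq f g (fst q) (snd q)) (nhds p)"
    proof -
      have "((\<lambda>q. snd q) \<longlongrightarrow> snd p) (nhds p)"
        by (intro tendsto_snd filterlim_ident)
      then have "eventually (\<lambda>q. snd q \<noteq> 0) (nhds p)"
        using False tendsto_imp_eventually_ne by blast
      then show ?thesis by eventually_elim (simp add: dq_def)
    qed
    have "isCont (\<lambda>q. (f (fst q + snd q) - f (fst q)) / snd q) p"
    proof -
      have fc: "isCont f z" for z using cf by (simp add: continuous_on_eq_continuous_at)
      have "isCont (\<lambda>q. f (fst q + snd q)) p"
        by (rule isCont_o2[OF _ fc]) (intro continuous_intros)
      moreover have "isCont (\<lambda>q. f (fst q)) p"
        by (rule isCont_o2[OF _ fc]) (intro continuous_intros)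
      ultimately show ?thesis using False by (intro continuous_intros) auto
    qed
    then show ?thesis using isCont_cong[OF ev] by simp
  next
    case True
    obtain x0 h0 where p: "p = (x0, h0)" by (cases p)
    with True have h0: "h0 = 0" by simp
    show ?thesis unfolding p h0 continuous_at_eps_delta
    proof (intro allI impI)
      fix e :: real assume e: "e > 0"
      have "isCont g x0" using cg by (simp add: continuous_on_eq_continuous_at)
      then obtain d where d: "d > 0" "\<And>z. dist z x0 < d \<Longrightarrow> dist (g z) (g x0) < e"
        using e unfolding continuous_at_eps_delta by blast
      show "\<exists>d>0. \<forall>q. dist q (x0, 0) < d \<longrightarrow> dist (dq f g (fst q) (snd q)) (dq f g (fst (x0, 0)) (snd (x0, 0::real))) < e"
      proof (intro exI[of _ "d/2"] conjI allI impI)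
        show "d/2 > 0" using d by simp
        fix q :: "real \<times> real" assume q: "dist q (x0, 0) < d/2"
        obtain x h where qq: "q = (x, h)" by (cases q)
        have dx: "dist x x0 < d/2" using q dist_fst_le[of q "(x0,0)"] qq by simp
        have dh: "\<bar>h\<bar> < d/2" using q dist_snd_le[of q "(x0,0)"] qq by simp
        have "\<exists>z. dist z x0 < d \<and> dq f g x h = g z"
        proof (cases "h = 0")
          case True then show ?thesis using dx d by (intro exI[of _ x]) (auto simp: dq_def)
        next
          case False
          show ?thesis
          proof (cases "h > 0")
            case True
            from MVT2[of x "x+h" f g] der True obtain z where z: "x < z" "z < x + h" "f (x+h) - f x = (x + h - x) * g z"
              by auto
            have "dist z x0 < d" using z dx dh unfolding dist_real_def by arith
            then show ?thesis using z True by (intro exI[of _ z]) (auto simp: dq_def)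
          next
            case False2: False
            with False have hn: "h < 0" by simp
            from MVT2[of "x+h" x f g] der hn obtain z where z: "x + h < z" "z < x" "f x - f (x+h) = (x - (x + h)) * g z"
              by auto
            have "dist z x0 < d" using z dx dh unfolding dist_real_def by arith
            moreover have "(f (x + h) - f x) / h = g z" using z hn by (auto simp: field_simps)
            ultimately show ?thesis using hn by (intro exI[of _ z]) (auto simp: dq_def)
          qed
        qed
        then obtain z where "dist z x0 < d" "dq f g x h = g z" by blast
        then show "dist (dq f g (fst q) (snd q)) (dq f g (fst (x0, 0)) (snd (x0, 0::real))) < e"
          using d qq by (simp add: dq_def)
      qed
    qed
  qed
  then show ?thesis by (simp add: continuous_on_eq_continuous_at)
qed


lemma subst01:
  fixes f g :: "real \<Rightarrow> real"
  assumes a: "a > 0" and cg: "continuous_on {0..1} g"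
    and fy: "\<And>y. 0 < y \<Longrightarrow> y < a \<Longrightarrow> f y = g (sqrt ((a - y) / a)) / (2 * a * sqrt ((a - y) / a))"
  shows "(f has_integral integral {0..1} g) {0..a}"
proof -
  define \<Phi> where "\<Phi> t = integral {0..t} g" for t
  define \<Psi> where "\<Psi> y = - \<Phi> (sqrt ((a - y) / a))" for y
  have c\<Phi>: "continuous_on {0..1} \<Phi>" unfolding \<Phi>_def
    by (rule indefinite_integral_continuous_1[OF integrable_continuous_real[OF cg]])
  have cs: "continuous_on {0..a} (\<lambda>y. sqrt ((a - y) / a))"
    using a by (intro continuous_intros) auto
  have img: "(\<lambda>y. sqrt ((a - y) / a)) ` {0..a} \<subseteq> {0..1}"
    using a by auto
  have c\<Psi>: "continuous_on {0..a} \<Psi>" unfolding \<Psi>_def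
    by (intro continuous_intros continuous_on_compose2[OF c\<Phi> cs img])
  have d\<Psi>: "(\<Psi> has_vector_derivative f y) (at y)" if y: "y \<in> {0<..<a}" for y
  proof -
    define t where "t = sqrt ((a - y) / a)"
    have t: "0 < t" "t < 1" using y a by (auto simp: t_def)
    have "(\<Phi> has_vector_derivative g t) (at t within {0..1})"
      unfolding \<Phi>_def using t by (intro integral_has_vector_derivative cg) auto
    then have d\<Phi>: "(\<Phi> has_real_derivative g t) (at t)"
      using t by (simp add: at_within_Icc_at has_real_derivative_iff_has_vector_derivative)
    have "((\<lambda>y. (a - y) / a) has_real_derivative (0 - 1) / a) (at y)"
      by (intro DERIV_cdivide DERIV_diff DERIV_const DERIV_ident)
    then have ds: "((\<lambda>y. sqrt ((a - y) / a)) has_real_derivative inverse t / 2 * ((0 - 1) / a)) (at y)"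
      unfolding t_def using y a by (intro DERIV_chain2[OF DERIV_real_sqrt]) auto
    have "(\<Psi> has_real_derivative - (g t * (inverse t / 2 * ((0 - 1) / a)))) (at y)"
      unfolding \<Psi>_def t_def by (rule DERIV_minus[OF DERIV_chain2[OF d\<Phi>[unfolded t_def] ds[unfolded t_def]]])
    moreover have "- (g t * (inverse t / 2 * ((0 - 1) / a))) = f y"
      using fy[of y] y t a by (simp add: t_def field_simps)
    ultimately show ?thesis by (simp add: has_real_derivative_iff_has_vector_derivative)
  qed
  have "(f has_integral (\<Psi> a - \<Psi> 0)) {0..a}"
    using a by (intro fundamental_theorem_of_calculus_interior c\<Psi> d\<Psi>) auto
  moreover have "\<Psi> a - \<Psi> 0 = integral {0..1} g"
    using a by (simp add: \<Psi>_def \<Phi>_def)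
  ultimately show ?thesis by simp
qed

locale cahn =
  fixes F f1 f2 :: "real \<Rightarrow> real" and \<kappa> \<phi>2 :: real
  assumes kappa: "\<kappa> > 0"
    and dF: "\<And>x. (F has_real_derivative f1 x) (at x)"
    and df1: "\<And>x. (f1 has_real_derivative f2 x) (at x)"
    and cf2: "continuous_on UNIV f2"
    and decr: "\<And>x y. 0 \<le> x \<Longrightarrow> x < y \<Longrightarrow> y < \<phi>2 \<Longrightarrow> F y < F x"
    and f1neg: "\<And>a. 0 < a \<Longrightarrow> a < \<phi>2 \<Longrightarrow> f1 a < 0"
begin

definition "c2 = 2 / \<kappa>"
definition "Q a v = - a * dq F f1 a (- a * v)"
definition "R a v = - a * dq f1 f2 a (- a * v)"
definition "Qa a v = R a v - f1 (a - a * v)"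
definition "S a u = c2 * Q a (u\<^sup>2)"
definition "k a u = 2 * a / sqrt (S a u)"
definition "kd a u = (2 * S a u - a * (c2 * Qa a (u\<^sup>2))) / (S a u * sqrt (S a u))"
definition "m a u = 2 * a * R a (u\<^sup>2) / (Q a (u\<^sup>2) * sqrt (Q a (u\<^sup>2)))"

lemma c2_pos: "c2 > 0" using kappa by (simp add: c2_def)

lemma Q_closed: "v \<noteq> 0 \<Longrightarrow> Q a v = (F (a - a * v) - F a) / v"
  by (cases "a = 0") (auto simp: Q_def dq_def field_simps)

lemma Q_zero: "Q a 0 = - a * f1 a"
  by (simp add: Q_def dq_def)

lemma R_closed: "v \<noteq> 0 \<Longrightarrow> R a v = (f1 (a - a * v) - f1 a) / v"
  by (cases "a = 0") (auto simp: R_def dq_def field_simps)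

lemma R_zero: "R a 0 = - a * f2 a"
  by (simp add: R_def dq_def)

lemma Q_pos:
  assumes "0 < a" "a < \<phi>2" "0 \<le> v" "v \<le> 1"
  shows "Q a v > 0"
proof (cases "v = 0")
  case True
  then show ?thesis using f1neg[of a] assms by (simp add: Q_zero mult_pos_neg)
next
  case False
  then have "v > 0" using assms by simp
  have "F a < F (a - a * v)"
    using assms \<open>v > 0\<close> by (intro decr) (auto simp: algebra_simps mult_le_cancel_left1)
  then show ?thesis using \<open>v > 0\<close> False by (simp add: Q_closed)
qed

lemma cf1: "continuous_on UNIV f1"
  by (meson DERIV_isCont continuous_at_imp_continuous_on df1)

lemma cont_comp:
  assumes "continuous_on UNIV (\<lambda>p. dq f g (fst p) (snd p))"
  shows "continuous_on UNIV (\<lambda>p::real\<times>real. dq f g (fst p) (- fst p * (snd p)\<^sup>2))"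
proof -
  have "continuous_on UNIV (\<lambda>p::real\<times>real. (\<lambda>p. dq f g (fst p) (snd p)) (fst p, - fst p * (snd p)\<^sup>2))"
    by (rule continuous_on_compose2[OF assms]) (auto intro!: continuous_intros)
  then show ?thesis by simp
qed

lemma cont_Q: "continuous_on UNIV (\<lambda>p. Q (fst p) ((snd p)\<^sup>2))"
  unfolding Q_def using cont_comp[OF dq_cont[OF dF cf1]]
  by (auto intro!: continuous_intros)

lemma cont_R: "continuous_on UNIV (\<lambda>p. R (fst p) ((snd p)\<^sup>2))"
  unfolding R_def using cont_comp[OF dq_cont[OF df1 cf2]]
  by (auto intro!: continuous_intros)

lemma cont_Qa: "continuous_on UNIV (\<lambda>p. Qa (fst p) ((snd p)\<^sup>2))"
proof -
  have "continuous_on UNIV (\<lambda>p::real\<times>real. f1 (fst p - fst p * (snd p)\<^sup>2))"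
    by (rule continuous_on_compose2[OF cf1]) (auto intro!: continuous_intros)
  then show ?thesis unfolding Qa_def using cont_R by (auto intro!: continuous_intros)
qed

lemma dQ: "((\<lambda>a. Q a v) has_real_derivative Qa a v) (at a)"
proof (cases "v = 0")
  case True
  have "((\<lambda>a. - a * f1 a) has_real_derivative - (1 * f1 a + a * f2 a)) (at a)"
    by (auto intro!: derivative_eq_intros df1)
  then show ?thesis using True
    by (simp add: Q_zero) (rule DERIV_cong, assumption, simp add: Qa_def R_zero)
next
  case False
  have e: "(\<lambda>a. Q a v) = (\<lambda>a. (F (a - a * v) - F a) / v)" using False by (simp add: Q_closed)
  have "((\<lambda>a. (F (a - a * v) - F a) / v) has_real_derivative (f1 (a - a * v) * (1 - 1 * v) - f1 a) / v) (at a)"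
  proof -
    have "((\<lambda>z. z - z * v) has_real_derivative 1 - 1 * v) (at a)"
      by (auto intro!: derivative_eq_intros)
    then have dF1: "((\<lambda>z. F (z - z * v)) has_real_derivative f1 (a - a * v) * (1 - 1 * v)) (at a)"
      by (rule DERIV_chain2[OF dF])
    show ?thesis by (intro DERIV_cdivide DERIV_diff dF1 dF)
  qed
  then show ?thesis using False by (simp add: e Qa_def R_closed field_simps)
qed

lemma dk:
  assumes "0 < a" "a < \<phi>2" "0 \<le> u" "u \<le> 1"
  shows "((\<lambda>a. k a u) has_real_derivative kd a u) (at a)"
proof -
  have Sp: "S a u > 0" unfolding S_def using Q_pos[of a "u\<^sup>2"] assms c2_pos
    by (simp add: power_le_one)
  have dS: "((\<lambda>a. S a u) has_real_derivative c2 * Qa a (u\<^sup>2)) (at a)"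
    unfolding S_def by (rule DERIV_cmult[OF dQ])
  have "((\<lambda>a. 2 * a / sqrt (S a u)) has_real_derivative
      (2 * sqrt (S a u) - 2 * a * (inverse (sqrt (S a u)) / 2 * (c2 * Qa a (u\<^sup>2)))) / (sqrt (S a u) * sqrt (S a u))) (at a)"
  proof -
    have dsq: "((\<lambda>a. sqrt (S a u)) has_real_derivative inverse (sqrt (S a u)) / 2 * (c2 * Qa a (u\<^sup>2))) (at a)"
      by (rule DERIV_chain2[OF DERIV_real_sqrt[OF Sp] dS])
    show ?thesis using Sp by (auto intro!: derivative_eq_intros dsq dS)
  qed
  moreover have "(2 * sqrt (S a u) - 2 * a * (inverse (sqrt (S a u)) / 2 * (c2 * Qa a (u\<^sup>2)))) / (sqrt (S a u) * sqrt (S a u)) = kd a u"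
    using Sp unfolding kd_def
    by (simp add: field_simps)
  ultimately show ?thesis unfolding k_def by simp
qed


lemma cont1:
  assumes "continuous_on UNIV (\<lambda>p. h (fst p) ((snd p)\<^sup>2))"
  shows "continuous_on A (\<lambda>u::real. h a (u\<^sup>2))"
proof -
  have "continuous_on UNIV (\<lambda>u::real. (\<lambda>p. h (fst p) ((snd p)\<^sup>2)) (a, u))"
    by (rule continuous_on_compose2[OF assms]) (auto intro!: continuous_intros)
  then have "continuous_on UNIV (\<lambda>u::real. h a (u\<^sup>2))" by simp
  then show ?thesis by (rule continuous_on_subset) simp
qed

lemma Q_pos1: "0 < a \<Longrightarrow> a < \<phi>2 \<Longrightarrow> u \<in> {0..1} \<Longrightarrow> Q a (u\<^sup>2) > 0"
  by (intro Q_pos) (auto simp: power_le_one)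

lemma Q_ne1: "0 < a \<Longrightarrow> a < \<phi>2 \<Longrightarrow> 0 \<le> u \<Longrightarrow> u \<le> 1 \<Longrightarrow> Q a (u\<^sup>2) \<noteq> 0"
  using Q_pos1[of a u] by auto

lemma cont_k: "0 < a \<Longrightarrow> a < \<phi>2 \<Longrightarrow> continuous_on {0..1} (k a)"
  unfolding k_def S_def using cont1[OF cont_Q, of "{0..1}" a] Q_ne1[of a] c2_pos
  by (auto intro!: continuous_intros)

lemma cont_m: "0 < a \<Longrightarrow> a < \<phi>2 \<Longrightarrow> continuous_on {0..1} (m a)"
  unfolding m_def using cont1[OF cont_Q, of "{0..1}" a] cont1[OF cont_R, of "{0..1}" a] Q_ne1[of a]
  by (auto intro!: continuous_intros)

lemma powr32: "(x::real) > 0 \<Longrightarrow> x powr (3/2) = x * sqrt x"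
proof -
  assume "x > 0"
  have "x powr (3/2) = x powr (1 + 1/2)" by simp
  also have "\<dots> = x powr 1 * x powr (1/2)" by (rule powr_add)
  also have "\<dots> = x * sqrt x" using \<open>x > 0\<close> by (simp add: powr_half_sqrt)
  finally show ?thesis .
qed

lemma subst_pt:
  assumes "0 < a" "0 < y" "y < a"
  defines "t \<equiv> sqrt ((a - y) / a)"
  shows "t > 0" "t\<^sup>2 \<noteq> 0" "a - a * t\<^sup>2 = y" "sqrt (t\<^sup>2) = t"
  using assms by (auto simp: t_def field_simps)

lemma period_eq:
  assumes "0 < a" "a < \<phi>2"
  shows "period \<kappa> F a = 4 * integral {0..1} (k a)"
proof -
  have "((\<lambda>y. 1 / sqrt ((2 / \<kappa>) * (F y - F a))) has_integral integral {0..1} (k a)) {0..a}"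
  proof (rule subst01[OF assms(1) cont_k[OF assms]])
    fix y assume y: "0 < y" "y < a"
    define t where "t = sqrt ((a - y) / a)"
    note tt = subst_pt[OF assms(1) y, folded t_def]
    have G: "F y - F a > 0" using decr[of y a] y assms by auto
    have "k a t = 2 * a / sqrt (c2 * ((F y - F a) / t\<^sup>2))"
      unfolding k_def S_def using tt by (simp add: Q_closed)
    also have "\<dots> = 2 * a * t / sqrt (c2 * (F y - F a))"
      using tt by (simp add: real_sqrt_divide real_sqrt_mult)
    finally show "1 / sqrt ((2 / \<kappa>) * (F y - F a)) = k a t / (2 * a * t)"
      using tt assms by (simp add: c2_def)
  qed
  then show ?thesis unfolding period_def by (simp add: integral_unique)
qed

lemma I_eq:
  assumes "0 < a" "a < \<phi>2"
  shows "integral {0..a} (\<lambda>y. (f1 y - f1 a) / (F y - F a) powr (3/2)) = integral {0..1} (m a)"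
proof -
  have "((\<lambda>y. (f1 y - f1 a) / (F y - F a) powr (3/2)) has_integral integral {0..1} (m a)) {0..a}"
  proof (rule subst01[OF assms(1) cont_m[OF assms]])
    fix y assume y: "0 < y" "y < a"
    define t where "t = sqrt ((a - y) / a)"
    note tt = subst_pt[OF assms(1) y, folded t_def]
    have G: "F y - F a > 0" using decr[of y a] y assms by auto
    have "m a t = 2 * a * ((f1 y - f1 a) / t\<^sup>2) / (((F y - F a) / t\<^sup>2) * sqrt ((F y - F a) / t\<^sup>2))"
      unfolding m_def using tt by (simp add: Q_closed R_closed)
    also have "\<dots> = 2 * a * t * (f1 y - f1 a) / ((F y - F a) * sqrt (F y - F a))"
      using tt G by (simp add: real_sqrt_divide field_simps)
    finally show "(f1 y - f1 a) / (F y - F a) powr (3/2) = m a t / (2 * a * t)"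
      using tt assms G by (simp add: powr32)
  qed
  then show ?thesis by (simp add: integral_unique)
qed


end


context cahn begin

lemma period_deriv:
  assumes a0: "0 < a0" "a0 < \<phi>2"
  shows "(period \<kappa> F has_real_derivative 4 * integral {0..1} (kd a0)) (at a0)"
proof -
  define \<delta> where "\<delta> = min a0 (\<phi>2 - a0) / 2"
  have \<delta>: "\<delta> > 0" using a0 by (simp add: \<delta>_def)
  define U where "U = {a0 - \<delta> .. a0 + \<delta>}"
  have \<delta>le: "\<delta> \<le> a0 / 2" "\<delta> \<le> (\<phi>2 - a0) / 2" by (auto simp: \<delta>_def)
  have U: "\<And>x. x \<in> U \<Longrightarrow> 0 < x \<and> x < \<phi>2" using a0 \<delta>le unfolding U_def by auto
  have a0U: "a0 \<in> U" using \<delta> by (simp add: U_def)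
  have ne: "Q (fst p) ((snd p)\<^sup>2) \<noteq> 0" if "p \<in> U \<times> {0..1}" for p
    using that U[of "fst p"] Q_ne1[of "fst p" "snd p"] by auto
  have cQ: "continuous_on (U \<times> {0..1}) (\<lambda>p. Q (fst p) ((snd p)\<^sup>2))"
    by (rule continuous_on_subset[OF cont_Q]) simp
  have cQa: "continuous_on (U \<times> {0..1}) (\<lambda>p. Qa (fst p) ((snd p)\<^sup>2))"
    by (rule continuous_on_subset[OF cont_Qa]) simp
  have ckd: "continuous_on (U \<times> {0..1}) (\<lambda>p. kd (fst p) (snd p))"
  proof -
    have cS: "continuous_on (U \<times> {0..1}) (\<lambda>p. S (fst p) (snd p))"
      unfolding S_def by (intro continuous_on_mult continuous_on_const cQ)
    have Sne: "\<forall>p\<in>U \<times> {0..1}. S (fst p) (snd p) * sqrt (S (fst p) (snd p)) \<noteq> 0"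
      using ne c2_pos by (auto simp: S_def)
    have "continuous_on (U \<times> {0..1}) (\<lambda>p. (2 * S (fst p) (snd p) - fst p * (c2 * Qa (fst p) ((snd p)\<^sup>2))) /
        (S (fst p) (snd p) * sqrt (S (fst p) (snd p))))"
      by (intro continuous_on_divide continuous_on_diff continuous_on_mult continuous_on_const cS cQa
          continuous_on_fst continuous_on_id continuous_on_real_sqrt Sne)
    then show ?thesis unfolding kd_def .
  qed
  have "((\<lambda>x. integral (cbox 0 1) (k x)) has_field_derivative integral (cbox 0 1) (kd a0)) (at a0 within U)"
  proof (rule leibniz_rule_field_derivative)
    fix x t assume xt: "x \<in> U" "t \<in> cbox (0::real) 1"
    have h12: "0 < x \<and> x < \<phi>2" by (rule U[OF xt(1)])
    have h34: "0 \<le> t \<and> t \<le> 1" using xt(2) by simp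
    have h: "0 < x" "x < \<phi>2" "0 \<le> t" "t \<le> 1" using h12 h34 by simp_all
    show "((\<lambda>x. k x t) has_field_derivative kd x t) (at x within U)"
      by (rule has_field_derivative_at_within[OF dk[OF h]])
  next
    fix x assume "x \<in> U"
    then show "k x integrable_on cbox 0 1"
      using U[of x] cont_k[of x] by (simp add: integrable_continuous_real)
  next
    show "continuous_on (U \<times> cbox 0 1) (\<lambda>(x, t). kd x t)"
      using ckd by (simp add: split_beta')
  next
    show "a0 \<in> U" by (rule a0U)
  next
    show "convex U" unfolding U_def by (rule convex_real_interval(5))
  qed
  moreover have "at a0 within U = at a0"
    unfolding U_def using \<delta> by (intro at_within_Icc_at) auto
  ultimately have "((\<lambda>x. integral {0..1} (k x)) has_field_derivative integral {0..1} (kd a0)) (at a0)"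
    by simp
  then have d4: "((\<lambda>x. 4 * integral {0..1} (k x)) has_field_derivative 4 * integral {0..1} (kd a0)) (at a0)"
    by (rule DERIV_cmult)
  have eqs: "\<And>x. x \<in> {0<..<\<phi>2} \<Longrightarrow> 4 * integral {0..1} (k x) = period \<kappa> F x"
    using period_eq by simp
  have o: "open {0<..<\<phi>2}" by simp
  have m: "a0 \<in> {0<..<\<phi>2}" using a0 by auto
  show ?thesis
    by (rule has_field_derivative_transform_within_open[OF d4 o m eqs])
qed

end

context cahn begin

lemma cont_kd: "0 < a \<Longrightarrow> a < \<phi>2 \<Longrightarrow> continuous_on {0..1} (kd a)"
  unfolding kd_def S_def using cont1[OF cont_Q, of "{0..1}" a] cont1[OF cont_Qa, of "{0..1}" a] Q_ne1[of a] c2_pos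
  by (auto intro!: continuous_intros)

lemma pt_ident:
  assumes "Q a (u\<^sup>2) > 0"
  shows "4 * kd a u + sqrt (2 * \<kappa>) * m a u
       = 2 * sqrt (2 * \<kappa>) * ((2 * Q a (u\<^sup>2) + a * f1 (a - a * u\<^sup>2)) / (Q a (u\<^sup>2) * sqrt (Q a (u\<^sup>2))))"
proof -
  define q where "q = Q a (u\<^sup>2)"
  define r where "r = R a (u\<^sup>2)"
  define w where "w = f1 (a - a * u\<^sup>2)"
  have q: "q > 0" using assms by (simp add: q_def)
  have sc: "sqrt c2 = sqrt 2 / sqrt \<kappa>" by (simp add: c2_def real_sqrt_divide)
  have s2: "sqrt (2 * \<kappa>) = sqrt 2 * sqrt \<kappa>" by (simp add: real_sqrt_mult)
  have k0: "sqrt \<kappa> > 0" using kappa by simp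
  have sq: "sqrt q * sqrt q = q" using q by simp
  have sqc: "sqrt (c2 * q) = sqrt c2 * sqrt q" by (simp add: real_sqrt_mult)
  have 22: "sqrt 2 * sqrt 2 = (2::real)" by simp
  have kdq: "kd a u = (2 * (c2 * q) - a * (c2 * (r - w))) / (c2 * q * (sqrt c2 * sqrt q))"
    unfolding kd_def S_def Qa_def q_def r_def w_def sqc[unfolded q_def] ..
  have mq: "m a u = 2 * a * r / (q * sqrt q)" unfolding m_def q_def r_def ..
  show ?thesis
    unfolding kdq mq q_def[symmetric] w_def[symmetric] sc s2
    using q k0 c2_pos sq 22 by (simp add: field_simps c2_def)
qed


lemma dLam:
  assumes a: "0 < a" "a < \<phi>2" and u: "0 < u" "u < 1"
  shows "((\<lambda>u. u / sqrt (Q a (u\<^sup>2))) has_real_derivative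
           (2 * Q a (u\<^sup>2) + a * f1 (a - a * u\<^sup>2)) / (Q a (u\<^sup>2) * sqrt (Q a (u\<^sup>2)))) (at u)"
proof -
  define G where "G u = F (a - a * u\<^sup>2) - F a" for u
  define q where "q = Q a (u\<^sup>2)"
  define w where "w = f1 (a - a * u\<^sup>2)"
  have q: "q > 0" unfolding q_def using Q_pos1[of a u] a u by auto
  have Gq: "G u = q * u\<^sup>2" unfolding G_def q_def using u by (simp add: Q_closed)
  have "((\<lambda>u. a - a * u\<^sup>2) has_real_derivative 0 - a * (2 * u)) (at u)"
    by (auto intro!: derivative_eq_intros)
  then have dF1: "((\<lambda>u. F (a - a * u\<^sup>2)) has_real_derivative w * (0 - a * (2 * u))) (at u)"
    unfolding w_def by (rule DERIV_chain2[OF dF])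
  have dG: "(G has_real_derivative w * (0 - a * (2 * u))) (at u)"
    unfolding G_def using dF1 by (auto intro!: derivative_eq_intros)
  define D1 where "D1 = (w * (0 - a * (2 * u)) * u\<^sup>2 - G u * (2 * u)) / (u\<^sup>2 * u\<^sup>2)"
  have "((\<lambda>u. G u / u\<^sup>2) has_real_derivative D1) (at u)"
    unfolding D1_def using u dG by (auto intro!: derivative_eq_intros simp: power2_eq_square)
  note dd = this
  have eqs: "\<And>x. x \<in> {0<..<1} \<Longrightarrow> G x / x\<^sup>2 = Q a (x\<^sup>2)"
    unfolding G_def by (simp add: Q_closed)
  have o: "open {0<..<1::real}" by simp
  have mu: "u \<in> {0<..<1}" using u by auto
  have dQ2: "((\<lambda>u. Q a (u\<^sup>2)) has_real_derivative D1) (at u)"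
    by (rule has_field_derivative_transform_within_open[OF dd o mu eqs])
  have D1: "D1 = - 2 * (a * w + q) / u"
    unfolding D1_def Gq using u by (simp add: field_simps power2_eq_square)
  have dsq: "((\<lambda>u. sqrt (Q a (u\<^sup>2))) has_real_derivative inverse (sqrt q) / 2 * D1) (at u)"
    unfolding q_def by (rule DERIV_chain2[OF DERIV_real_sqrt dQ2]) (use q in \<open>simp add: q_def\<close>)
  have "((\<lambda>u. u / sqrt (Q a (u\<^sup>2))) has_real_derivative
      (1 * sqrt (Q a (u\<^sup>2)) - u * (inverse (sqrt q) / 2 * D1)) / (sqrt (Q a (u\<^sup>2)) * sqrt (Q a (u\<^sup>2)))) (at u)"
    by (rule DERIV_divide[OF DERIV_ident dsq]) (use q in \<open>simp add: q_def\<close>)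
  then have "((\<lambda>u. u / sqrt (Q a (u\<^sup>2))) has_real_derivative
      (1 * sqrt q - u * (inverse (sqrt q) / 2 * D1)) / (sqrt q * sqrt q)) (at u)"
    by (simp only: q_def)
  moreover have "(1 * sqrt q - u * (inverse (sqrt q) / 2 * D1)) / (sqrt q * sqrt q)
      = (2 * q + a * w) / (q * sqrt q)"
  proof -
    have sq: "sqrt q * sqrt q = q" using q by simp
    show ?thesis unfolding D1 using q u sq by (simp add: field_simps)
  qed
  ultimately show ?thesis by (simp add: q_def w_def)
qed

lemma ident:
  assumes a: "0 < a" "a < \<phi>2"
  shows "4 * integral {0..1} (kd a) = 2 * sqrt (2 * \<kappa>) / sqrt (F 0 - F a) - sqrt (2 * \<kappa>) * integral {0..1} (m a)"
proof -
  define \<Lambda> where "\<Lambda> u = 2 * sqrt (2 * \<kappa>) * (u / sqrt (Q a (u\<^sup>2)))" for u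
  define L' where "L' u = 2 * sqrt (2 * \<kappa>) * ((2 * Q a (u\<^sup>2) + a * f1 (a - a * u\<^sup>2)) / (Q a (u\<^sup>2) * sqrt (Q a (u\<^sup>2))))" for u
  have c\<Lambda>: "continuous_on {0..1} \<Lambda>"
    unfolding \<Lambda>_def using cont1[OF cont_Q, of "{0..1}" a] Q_ne1[of a] a
    by (auto intro!: continuous_intros)
  have "(L' has_integral (\<Lambda> 1 - \<Lambda> 0)) {0..1}"
  proof (rule fundamental_theorem_of_calculus_interior)
    fix u :: real assume "u \<in> {0<..<1}"
    then show "(\<Lambda> has_vector_derivative L' u) (at u)"
      unfolding \<Lambda>_def L'_def has_real_derivative_iff_has_vector_derivative[symmetric]
      using a by (intro DERIV_cmult dLam) auto
  qed (use c\<Lambda> in auto)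
  moreover have "\<Lambda> 1 - \<Lambda> 0 = 2 * sqrt (2 * \<kappa>) / sqrt (F 0 - F a)"
    unfolding \<Lambda>_def by (simp add: Q_closed)
  ultimately have h1: "(L' has_integral 2 * sqrt (2 * \<kappa>) / sqrt (F 0 - F a)) {0..1}" by simp
  have "((\<lambda>u. 4 * kd a u + sqrt (2 * \<kappa>) * m a u) has_integral 2 * sqrt (2 * \<kappa>) / sqrt (F 0 - F a)) {0..1}"
  proof (rule has_integral_eq[OF _ h1])
    fix u :: real assume "u \<in> {0..1}"
    then show "L' u = 4 * kd a u + sqrt (2 * \<kappa>) * m a u"
      unfolding L'_def using pt_ident[OF Q_pos1[OF a \<open>u \<in> {0..1}\<close>]] by simp
  qed
  moreover have "((\<lambda>u. 4 * kd a u + sqrt (2 * \<kappa>) * m a u) has_integral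
      4 * integral {0..1} (kd a) + sqrt (2 * \<kappa>) * integral {0..1} (m a)) {0..1}"
    using cont_kd[OF a] cont_m[OF a]
    by (intro has_integral_add has_integral_mult_right integrable_integral integrable_continuous_real)
  ultimately have "4 * integral {0..1} (kd a) + sqrt (2 * \<kappa>) * integral {0..1} (m a) = 2 * sqrt (2 * \<kappa>) / sqrt (F 0 - F a)"
    by (rule has_integral_unique[rotated])
  then show ?thesis by linarith
qed

end

locale cahn3 = cahn +
  fixes f3 :: "real \<Rightarrow> real"
  assumes df2: "\<And>x. (f2 has_real_derivative f3 x) (at x)"
    and f3pos: "\<And>x. 0 < x \<Longrightarrow> x < \<phi>2 \<Longrightarrow> f3 x > 0"
    and f10: "f1 0 = 0"
begin

lemma g_pos:
  assumes "0 < x" "x < \<phi>2"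
  shows "x * f2 x - f1 x > 0"
proof -
  have dg: "((\<lambda>t. t * f2 t - f1 t) has_real_derivative (1 * f2 t + t * f3 t - f2 t)) (at t)" for t
    by (auto intro!: derivative_eq_intros df1 df2)
  have "(\<lambda>t. 0 * f2 0 - f1 0) 0 < (\<lambda>t. t * f2 t - f1 t) x"
  proof (rule DERIV_pos_imp_increasing_open[OF assms(1)])
    fix t :: real assume "0 < t" "t < x"
    then show "\<exists>y. ((\<lambda>t. t * f2 t - f1 t) has_real_derivative y) (at t) \<and> y > 0"
      using dg[of t] f3pos[of t] assms by (intro exI[of _ "1 * f2 t + t * f3 t - f2 t"]) simp
  next
    show "continuous_on {0..x} (\<lambda>t. t * f2 t - f1 t)"
      using dg by (meson DERIV_isCont continuous_at_imp_continuous_on)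
  qed
  then show ?thesis using f10 by simp
qed

lemma h_dec:
  assumes "0 \<le> y" "y < z" "z < \<phi>2"
  shows "F z - z * f1 z / 2 < F y - y * f1 y / 2"
proof -
  have dh: "((\<lambda>t. F t - t * f1 t / 2) has_real_derivative (f1 t - (1 * f1 t + t * f2 t) / 2)) (at t)" for t
    by (auto intro!: derivative_eq_intros dF df1)
  show ?thesis
  proof (rule DERIV_neg_imp_decreasing_open[OF assms(2), where f = "\<lambda>t. F t - t * f1 t / 2", simplified])
    fix t :: real assume "y < t" "t < z"
    then have "t * f2 t - f1 t > 0" using g_pos[of t] assms by simp
    then show "\<exists>d. ((\<lambda>t. F t - t * f1 t / 2) has_real_derivative d) (at t) \<and> d < 0"
      using dh[of t] by (intro exI[of _ "f1 t - (1 * f1 t + t * f2 t) / 2"]) simp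
  next
    show "continuous_on {y..z} (\<lambda>t. F t - t * f1 t / 2)"
      using dh by (meson DERIV_isCont continuous_at_imp_continuous_on)
  qed
qed

lemma kd_pos:
  assumes a: "0 < a" "a < \<phi>2" and u: "0 \<le> u" "u \<le> 1"
  shows "kd a u > 0"
proof -
  define v where "v = u\<^sup>2"
  have v: "0 \<le> v" "v \<le> 1" using u by (auto simp: v_def power_le_one)
  have q: "Q a v > 0" using Q_pos[OF a v] .
  have num: "2 * Q a v - a * Qa a v > 0"
  proof (cases "v = 0")
    case True
    have "2 * Q a v - a * Qa a v = a * (a * f2 a - f1 a)"
      using True by (simp add: Q_zero Qa_def R_zero algebra_simps)
    then show ?thesis using g_pos[OF a] a by simp
  next
    case False
    define y where "y = a - a * v"
    have y: "0 \<le> y" "y < a" using v False a by (auto simp: y_def mult_le_cancel_left1)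
    have av: "a * v = a - y" by (simp add: y_def)
    have "2 * Q a v - a * Qa a v = (2 * (F y - F a) - a * (f1 y - f1 a) + a * v * f1 y) / v"
      using False by (simp add: Q_closed Qa_def R_closed y_def field_simps)
    also have "\<dots> = 2 * ((F y - y * f1 y / 2) - (F a - a * f1 a / 2)) / v"
      unfolding av by (simp add: algebra_simps)
    finally show ?thesis using h_dec[OF y a(2)] v False by simp
  qed
  have "kd a u = c2 * (2 * Q a v - a * Qa a v) / (S a u * sqrt (S a u))"
    unfolding kd_def S_def v_def by (simp add: algebra_simps)
  moreover have "S a u > 0" unfolding S_def v_def[symmetric] using q c2_pos by simp
  ultimately show ?thesis using num c2_pos by simp
qed

lemma int_kd_pos:
  assumes a: "0 < a" "a < \<phi>2"
  shows "integral {0..1} (kd a) > 0"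
proof -
  obtain x where x: "x \<in> {0..1}" "\<And>y. y \<in> {0..1} \<Longrightarrow> kd a x \<le> kd a y"
    using continuous_attains_inf[OF compact_Icc _ cont_kd[OF a]] by auto
  have "kd a x > 0" using kd_pos[OF a] x(1) by auto
  have "integral {0..1} (\<lambda>_::real. kd a x) \<le> integral {0..1} (kd a)"
  proof (rule Henstock_Kurzweil_Integration.integral_le)
    show "(\<lambda>_::real. kd a x) integrable_on {0..1}" by (intro integrable_continuous_real continuous_on_const)
    show "kd a integrable_on {0..1}" by (rule integrable_continuous_real[OF cont_kd[OF a]])
  qed (use x(2) in auto)
  then show ?thesis using \<open>kd a x > 0\<close> by simp
qed

end



theorem proposition1:
  fixes \<kappa> :: real and F :: "real \<Rightarrow> real" and \<phi>1 \<phi>2 \<phi>3 \<phi>4 :: real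
  assumes kappa_pos: "\<kappa> > 0"
    and C4: "C_k_real 4 F"
    and even: "\<And>x. F (- x) = F x"
    and order: "\<phi>1 < \<phi>3" "\<phi>3 < 0" "0 < \<phi>4" "\<phi>4 < \<phi>2"
    and dec1: "strict_antimono_on {..<\<phi>1} F"
    and dec2: "strict_antimono_on {0<..<\<phi>2} F"
    and inc1: "strict_mono_on {\<phi>1<..<0} F"
    and inc2: "strict_mono_on {\<phi>2<..} F"
    and cvx1: "convex_on {..<\<phi>3} F"
    and cvx2: "convex_on {\<phi>4<..} F"
    and ccv: "concave_on {\<phi>3<..<\<phi>4} F"
    and min1: "\<exists>e>0. \<forall>y. \<bar>y - \<phi>1\<bar> < e \<longrightarrow> F \<phi>1 \<le> F y"
    and min2: "\<exists>e>0. \<forall>y. \<bar>y - \<phi>2\<bar> < e \<longrightarrow> F \<phi>2 \<le> F y"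
    and zero: "F \<phi>1 = 0" "F \<phi>2 = 0"
    and max0: "\<exists>e>0. \<forall>y. \<bar>y\<bar> < e \<longrightarrow> F y \<le> F 0"
  shows "(\<forall>a\<in>{0<..<\<phi>2}.
            (period \<kappa> F has_real_derivative
               (2 * sqrt (2 * \<kappa>) / sqrt (F 0 - F a)
                - sqrt (2 * \<kappa>) * integral {0..a}
                    (\<lambda>y. (deriv F y - deriv F a) / (F y - F a) powr (3/2)))) (at a))
       \<and> ((\<forall>x\<in>{0<..<\<phi>2}. (deriv ^^ 3) F x > 0) \<longrightarrow>
            (\<forall>a\<in>{0<..<\<phi>2}. deriv (period \<kappa> F) a > 0))"
proof -
  define f1 where "f1 = deriv F"
  define f2 where "f2 = deriv f1"
  define f3 where "f3 = deriv f2"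
  have diff: "\<And>j x. j < 4 \<Longrightarrow> (deriv ^^ j) F differentiable (at x)"
    using C4 unfolding C_k_real_def by blast
  have e2: "(deriv ^^ 2) F = f2" by (simp add: f2_def f1_def numeral_2_eq_2)
  have e3: "(deriv ^^ 3) F = f3" by (simp add: f3_def f2_def f1_def numeral_3_eq_3)
  have dF: "\<And>x. (F has_real_derivative f1 x) (at x)"
    using diff[of 0] unfolding f1_def by (simp add: DERIV_deriv_iff_real_differentiable)
  have df1: "\<And>x. (f1 has_real_derivative f2 x) (at x)"
    using diff[of 1] unfolding f2_def f1_def by (simp add: DERIV_deriv_iff_real_differentiable)
  have df2: "\<And>x. (f2 has_real_derivative f3 x) (at x)"
    using diff[of 2] unfolding f3_def e2[symmetric] by (simp add: DERIV_deriv_iff_real_differentiable)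
  have cf2: "continuous_on UNIV f2"
    using df2 by (meson DERIV_isCont continuous_at_imp_continuous_on)
  have cf1: "\<And>x. isCont f1 x" using df1 by (meson DERIV_isCont)
  have decr_pos: "F y < F x" if "0 < x" "x < y" "y < \<phi>2" for x y
    using monotone_onD[OF dec2, of x y] that by auto
  have decr: "F y < F x" if "0 \<le> x" "x < y" "y < \<phi>2" for x y
  proof (cases "x = 0")
    case False
    then show ?thesis using decr_pos that by simp
  next
    case True
    obtain e where e: "e > 0" "\<And>y. \<bar>y\<bar> < e \<Longrightarrow> F y \<le> F 0" using max0 by blast
    define x' where "x' = min e y / 2"
    have x': "0 < x'" "x' < y" "\<bar>x'\<bar> < e" using e that True by (auto simp: x'_def min_def)
    have "F y < F x'" using decr_pos[of x' y] x' that by simp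
    also have "\<dots> \<le> F 0" using e(2)[OF x'(3)] .
    finally show ?thesis using True by simp
  qed
  have T1: "F x \<le> F c + f1 c * (x - c)" if "c \<in> {\<phi>3<..<\<phi>4}" "x \<in> {\<phi>3<..<\<phi>4}" for c x
  proof -
    have "convex_on {\<phi>3<..<\<phi>4} (\<lambda>x. - F x)" using ccv by (simp add: concave_on_def)
    moreover have "((\<lambda>x. - F x) has_real_derivative - f1 c) (at c within {\<phi>3<..<\<phi>4})"
      by (rule has_field_derivative_at_within[OF DERIV_minus[OF dF]])
    ultimately have "- F x - - F c \<ge> - f1 c * (x - c)"
      using that by (intro convex_on_imp_above_tangent) (auto simp: interior_open convex_connected)
    then show ?thesis by (simp add: algebra_simps)
  qed
  have T2: "F x - F c \<ge> f1 c * (x - c)" if "c \<in> {\<phi>4<..}" "x \<in> {\<phi>4<..}" for c x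
    using that cvx2
    by (intro convex_on_imp_above_tangent has_field_derivative_at_within[OF dF])
       (auto simp: interior_open convex_connected)
  have f1le: "f1 a \<le> 0" if aa: "0 < a" "a < \<phi>2" for a
  proof (rule ccontr)
    assume "\<not> f1 a \<le> 0"
    then obtain d where d: "d > 0" "\<And>h. h > 0 \<Longrightarrow> h < d \<Longrightarrow> F a < F (a + h)"
      using DERIV_pos_inc_right[OF dF[of a]] by force
    obtain mm where m: "mm \<le> \<phi>2 - a" "mm \<le> d" "mm > 0"
      using d aa by (intro that[of "min d (\<phi>2 - a)"]) auto
    define h where "h = mm / 2"
    have h: "h > 0" "h < d" "a + h < \<phi>2" using m unfolding h_def by linarith+
    show False using d(2)[OF h(1,2)] decr[of a "a + h"] h aa by simp
  qed
  have f1neg_r: "f1 c < 0" if "\<phi>4 < c" "c < \<phi>2" for c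
  proof -
    define x where "x = (c + \<phi>2) / 2"
    have "F x - F c \<ge> f1 c * (x - c)" using T2[of c x] that by (simp add: x_def)
    moreover have "F x < F c" using decr[of c x] that order by (simp add: x_def)
    ultimately have "f1 c * (x - c) < 0" by simp
    moreover have "x - c > 0" using that by (simp add: x_def)
    ultimately show ?thesis by (simp add: mult_less_0_iff)
  qed
  have f1mono: "f1 x \<le> f1 z" if "\<phi>4 < x" "x < z" for x z
  proof -
    have "F x - F z \<ge> f1 z * (x - z)" using T2[of z x] that by simp
    moreover have "F z - F x \<ge> f1 x * (z - x)" using T2[of x z] that by simp
    ultimately have "(f1 x - f1 z) * (z - x) \<le> 0" by (simp add: algebra_simps)
    then show ?thesis using that by (simp add: mult_le_0_iff)
  qed
  have f1neg: "f1 a < 0" if a: "0 < a" "a < \<phi>2" for a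
  proof (rule ccontr)
    assume "\<not> f1 a < 0"
    with f1le[OF a] have z: "f1 a = 0" by simp
    consider "a < \<phi>4" | "a = \<phi>4" | "a > \<phi>4" by linarith
    then show False
    proof cases
      case 1
      have "F (a / 2) \<le> F a + f1 a * (a / 2 - a)" using T1[of a "a/2"] 1 a order by auto
      moreover have "F a < F (a / 2)" using decr[of "a/2" a] a by simp
      ultimately show False using z by simp
    next
      case 3
      then show False using f1neg_r[OF 3 a(2)] z by simp
    next
      case 2
      define zz where "zz = (\<phi>4 + \<phi>2) / 2"
      have zz: "\<phi>4 < zz" "zz < \<phi>2" using order by (auto simp: zz_def)
      have "(f1 \<longlongrightarrow> f1 \<phi>4) (at_right \<phi>4)"
        using cf1[of \<phi>4] by (simp add: isCont_def filterlim_at_split)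
      moreover have "eventually (\<lambda>x. f1 zz \<ge> f1 x) (at_right \<phi>4)"
        using eventually_at_right_real[OF zz(1)] by eventually_elim (auto intro: f1mono)
      ultimately have "f1 \<phi>4 \<le> f1 zz"
        by (rule tendsto_upperbound) simp
      then show False using f1neg_r[OF zz] z 2 by simp
    qed
  qed
  interpret cahn F f1 f2 \<kappa> \<phi>2
    using kappa_pos dF df1 cf2 decr f1neg by unfold_locales auto
  have f10: "f1 0 = 0"
  proof -
    obtain e where e: "e > 0" "\<forall>y. \<bar>y\<bar> < e \<longrightarrow> F y \<le> F 0" using max0 by blast
    show ?thesis by (rule DERIV_local_max[OF dF e(1)]) (use e(2) in simp)
  qed
  show ?thesis
  proof (intro conjI ballI impI)
    fix a assume "a \<in> {0<..<\<phi>2}"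
    then have a: "0 < a" "a < \<phi>2" by auto
    have "4 * integral {0..1} (kd a) = 2 * sqrt (2 * \<kappa>) / sqrt (F 0 - F a)
        - sqrt (2 * \<kappa>) * integral {0..a} (\<lambda>y. (f1 y - f1 a) / (F y - F a) powr (3/2))"
      using ident[OF a] I_eq[OF a] by simp
    then show "(period \<kappa> F has_real_derivative
               (2 * sqrt (2 * \<kappa>) / sqrt (F 0 - F a)
                - sqrt (2 * \<kappa>) * integral {0..a}
                    (\<lambda>y. (deriv F y - deriv F a) / (F y - F a) powr (3/2)))) (at a)"
      using period_deriv[OF a] by (simp add: f1_def)
  next
    fix a assume pos: "\<forall>x\<in>{0<..<\<phi>2}. (deriv ^^ 3) F x > 0" and "a \<in> {0<..<\<phi>2}"
    then have a: "0 < a" "a < \<phi>2" by auto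
    interpret cahn3 F f1 f2 \<kappa> \<phi>2 f3
      using df2 pos f10 e3 by unfold_locales auto
    show "deriv (period \<kappa> F) a > 0"
      using DERIV_imp_deriv[OF period_deriv[OF a]] int_kd_pos[OF a] by simp
  qed
qed


end
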